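(* Let $A,B\in\mathbb{R}^{n\times n}$ be two rank-one positive semi-definite matrices and let $C=A-B$. Then $c:=2\,\mathrm{tr}[C^2]-(\mathrm{tr}[C])^2\ge 0$, with $c=0$ if and only if $A=B$. *)

theory Defs
  imports "HOL-Analysis.Analysis"
begin

definition psd :: "real^'n^'n \<Rightarrow> bool" where
  "psd A \<longleftrightarrow> transpose A = A \<and> (\<forall>x. 0 \<le> x \<bullet> (A *v x))"

end

theory Submission
  imports Defs
begin

lemma rank1_outer:
  fixes A :: "real^'n^'m"
  assumes "rank A = 1"
  shows "\<exists>u c. u \<noteq> 0 \<and> (\<forall>i j. A$i$j = c i * u$j)"
proof -
  obtain S where S: "independent S" "rows A \<subseteq> span S" "S \<subseteq> rows A" "card S = dim (rows A)"
    using basis_exists[of "rows A"] by blast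
  then have "card S = 1" using assms by (simp add: row_rank_def)
  then obtain u where u: "S = {u}" using card_1_singletonE by blast
  have "u \<noteq> 0" using S(1) u by (simp add: dependent_single)
  have "\<forall>i. \<exists>k. row i A = k *\<^sub>R u"
  proof
    fix i
    have "row i A \<in> rows A" by (auto simp: rows_def)
    then have "row i A \<in> span {u}" using S(2) u by auto
    then show "\<exists>k. row i A = k *\<^sub>R u" by (auto simp: span_singleton)
  qed
  then obtain c where c: "\<And>i. row i A = c i *\<^sub>R u" by metis
  have "A$i$j = c i * u$j" for i j
  proof -
    have "row i A $ j = A$i$j" by (simp add: row_def)
    then show ?thesis using c[of i] by simp
  qed
  then show ?thesis using \<open>u \<noteq> 0\<close> by blast
qed

lemma psd_rank1:
  fixes A :: "real^'n^'n"
  assumes "psd A" "rank A = 1"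
  shows "\<exists>a. \<forall>i j. A$i$j = a$i * a$j"
proof -
  obtain u c where u: "u \<noteq> 0" and A: "\<And>i j. A$i$j = c i * u$j"
    using rank1_outer[OF assms(2)] by blast
  obtain k where k: "u$k \<noteq> 0" using u by (metis vec_eq_iff zero_index)
  have sym: "A$i$j = A$j$i" for i j
    using assms(1) unfolding psd_def by (metis transpose_def vec_lambda_beta)
  define l where "l = c k / u$k"
  have ci: "c i = l * u$i" for i
  proof -
    have "c i * u$k = c k * u$i" using sym[of i k] A by simp
    then show ?thesis using k unfolding l_def by (simp add: field_simps)
  qed
  have A2: "A$i$j = l * (u$i * u$j)" for i j using A ci by simp
  have "A *v u = (l * (u \<bullet> u)) *\<^sub>R u"
    by (simp add: vec_eq_iff matrix_vector_mult_def A2 inner_vec_def sum_distrib_left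
        algebra_simps power2_eq_square)
  then have "u \<bullet> (A *v u) = l * (u \<bullet> u)^2" by (simp add: power2_eq_square)
  moreover have "0 \<le> u \<bullet> (A *v u)" using assms(1) unfolding psd_def by blast
  moreover have "u \<bullet> u > 0" using u by simp
  ultimately have "l \<ge> 0" by (simp add: zero_le_mult_iff)
  define a where "a = sqrt l *\<^sub>R u"
  have "A$i$j = a$i * a$j" for i j
    using \<open>l \<ge> 0\<close> unfolding a_def A2 by (simp add: algebra_simps real_sqrt_mult_self)
  then show ?thesis by blast
qed

lemma trace_sq:
  fixes a b :: "real^'n"
  assumes "\<And>i j. C$i$j = a$i * a$j - b$i * b$j"
  shows "trace (C ** C) = (a\<bullet>a)^2 + (b\<bullet>b)^2 - 2 * (a\<bullet>b)^2"
    and "trace C = a\<bullet>a - b\<bullet>b"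
proof -
  have "trace (C ** C) = (\<Sum>i\<in>UNIV. \<Sum>j\<in>UNIV. (a$i * a$j - b$i * b$j) * (a$j * a$i - b$j * b$i))"
    by (simp add: trace_def matrix_matrix_mult_def assms)
  also have "\<dots> = (\<Sum>i\<in>UNIV. \<Sum>j\<in>UNIV. (a$i*a$i) * (a$j*a$j) + (b$i*b$i) * (b$j*b$j) - 2 * ((a$i*b$i) * (a$j*b$j)))"
    by (intro sum.cong refl) (simp add: algebra_simps)
  also have "\<dots> = (a\<bullet>a)^2 + (b\<bullet>b)^2 - 2 * (a\<bullet>b)^2"
    by (simp add: inner_vec_def sum.distrib sum_subtractf power2_eq_square sum_product
        sum_distrib_left[symmetric] mult.assoc)
  finally show "trace (C ** C) = (a\<bullet>a)^2 + (b\<bullet>b)^2 - 2 * (a\<bullet>b)^2" .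
  show "trace C = a\<bullet>a - b\<bullet>b"
    by (simp add: trace_def assms inner_vec_def sum_subtractf)
qed

theorem proposition1:
  fixes A B :: "real^'n^'n"
  assumes "psd A" and "rank A = 1"
      and "psd B" and "rank B = 1"
  shows "2 * trace ((A - B) ** (A - B)) - (trace (A - B))^2 \<ge> 0
         \<and> (2 * trace ((A - B) ** (A - B)) - (trace (A - B))^2 = 0 \<longleftrightarrow> A = B)"
proof -
  obtain a where a: "\<And>i j. A$i$j = a$i * a$j" using psd_rank1 assms(1,2) by blast
  obtain b where b: "\<And>i j. B$i$j = b$i * b$j" using psd_rank1 assms(3,4) by blast
  have C: "(A - B)$i$j = a$i * a$j - b$i * b$j" for i j using a b by simp
  define x where "x = a\<bullet>a"
  define y where "y = b\<bullet>b"
  define p where "p = a\<bullet>b"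
  have eq: "2 * trace ((A - B) ** (A - B)) - (trace (A - B))^2 = (x + y)^2 - 4 * p^2"
    unfolding trace_sq[OF C] x_def y_def p_def by (simp add: power2_eq_square algebra_simps)
  have cs: "p^2 \<le> x * y"
  proof -
    have "\<bar>p\<bar> \<le> norm a * norm b" unfolding p_def by (rule Cauchy_Schwarz_ineq2)
    then have "p^2 \<le> (norm a * norm b)^2"
      by (metis abs_ge_zero power2_abs power_mono)
    then show ?thesis unfolding x_def y_def by (simp add: power_mult_distrib power2_norm_eq_inner)
  qed
  have nn: "(x + y)^2 - 4 * p^2 \<ge> (x - y)^2" using cs by (simp add: power2_eq_square algebra_simps)
  have ge: "(x + y)^2 - 4 * p^2 \<ge> 0" using nn by (smt (verit) zero_le_power2)
  have iff: "(x + y)^2 - 4 * p^2 = 0 \<longleftrightarrow> A = B"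
  proof
    assume h: "(x + y)^2 - 4 * p^2 = 0"
    then have "(x - y)^2 \<le> 0" using nn by simp
    then have xy: "x = y" by simp
    have "(a - b)\<bullet>(a - b) * ((a + b)\<bullet>(a + b)) = (x + y)^2 - 4 * p^2"
      using xy unfolding x_def y_def p_def
      by (simp add: inner_diff inner_add inner_commute power2_eq_square algebra_simps)
    then have "(a - b)\<bullet>(a - b) = 0 \<or> (a + b)\<bullet>(a + b) = 0" using h by simp
    then have "a = b \<or> a = - b" by (auto simp: add_eq_0_iff)
    then show "A = B" using a b by (auto simp: vec_eq_iff)
  next
    assume "A = B"
    then have "2 * trace ((A - B) ** (A - B)) - (trace (A - B))^2 = 0"
      by (simp add: trace_def matrix_matrix_mult_def)
    then show "(x + y)^2 - 4 * p^2 = 0" using eq by simp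
  qed
  show ?thesis using eq ge iff by simp
qed

end
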